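(* Let $\mathcal M=(W,W_\bot,\preccurlyeq,\sqsubseteq,V)$ be a forest-like bi-intuitionistic model of finite height $n$, and let $\Sigma$ be a finite set of formulas with $\#\Sigma=s$. Then $\#(W/{\approx_\Sigma})\le 2^{2(n+1)s}_{n+2}$.
   Context: Formulas: $p\mid\bot\mid\varphi\wedge\psi\mid\varphi\vee\psi\mid\varphi\to\psi\mid\Diamond\varphi\mid\Box\varphi$ over a countably infinite set $\mathbb P$. A bi-intuitionistic model $(W,W_\bot,\preccurlyeq,\sqsubseteq,V)$: $\preccurlyeq,\sqsubseteq$ preorders on $W$, $W_\bot$ upward closed under both, $V:\mathbb P\to2^W$ with $V(p)$ $\preccurlyeq$-upward closed and $\supseteq W_\bot$. Satisfaction: $p$ iff $w\in V(p)$; $\bot$ iff $w\in W_\bot$; $\wedge,\vee$ pointwise; $w\models\varphi\to\psi$ iff for all $v\succcurlyeq w$, $v\models\varphi$ implies $v\models\psi$; $w\models\Diamond\varphi$ iff for all $u\succcurlyeq w$ there is $v\sqsupseteq u$ with $v\models\varphi$; $w\models\Box\varphi$ iff $v\models\varphi$ whenever $w\preccurlyeq u\sqsubseteq v$. $w\prec v$ means $w\preccurlyeq v$ and $v\not\preccurlyeq w$. The height of $w$ is the supremum of $n$ such that there is a chain $w=w_0\prec\cdots\prec w_n$; the height of $\mathcal M$ is the supremum of heights of its worlds. $\mathcal M$ is forest-like if for every $w$ the set $\{v:v\preccurlyeq w\}$ is totally ordered by $\preccurlyeq$. For $R\subseteq W\times W$: forward confluent if $w\preccurlyeq w'$, $wRv$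 imply some $v'$ with $v\preccurlyeq v'$, $w'Rv'$; backward confluent if $wRv\preccurlyeq v'$ implies some $w'$ with $w\preccurlyeq w'Rv'$; downward confluent if $w\preccurlyeq vRv'$ implies some $w'$ with $wRw'\preccurlyeq v'$. The $\Sigma$-label of $w$ is $\ell(w)=(\ell^+(w);\ell^\Diamond(w))$ with $\ell^+(w)=\{\varphi\in\Sigma:(\mathcal M,w)\models\varphi\}$, $\ell^\Diamond(w)=\{\varphi\in\Sigma:\forall v\sqsupseteq w,\ (\mathcal M,v)\not\models\varphi\}$. A $\Sigma$-bisimulation is a forward and backward confluent $Z\subseteq W\times W$ with $wZv\Rightarrow\ell(w)=\ell(v)$. A strong $\Sigma$-bisimulation is a $\Sigma$-bisimulation $Z$ such that both $Z$ and $Z^{-1}$ are downward confluent; $\approx_\Sigma$ is the greatest strong $\Sigma$-bisimulation (the union of all), an equivalence relation. Superexponential: $2^x_0=x$ and $2^x_{y+1}=2^{2^x_y}$. *)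

theory Defs
  imports Main "HOL-Library.Extended_Nat"
begin

datatype fm =
    Var nat
  | Bot
  | And fm fm
  | Or fm fm
  | Imp fm fm
  | Dia fm
  | Box fm

record 'w bimodel =
  W    :: "'w set"
  Wbot :: "'w set"
  leq  :: "('w \<times> 'w) set"
  sq   :: "('w \<times> 'w) set"
  V    :: "nat \<Rightarrow> 'w set"

definition is_bimodel :: "'w bimodel \<Rightarrow> bool" where
  "is_bimodel M \<longleftrightarrow>
     leq M \<subseteq> W M \<times> W M \<and> sq M \<subseteq> W M \<times> W M \<and>
     refl_on (W M) (leq M) \<and> trans (leq M) \<and>
     refl_on (W M) (sq M) \<and> trans (sq M) \<and>
     Wbot M \<subseteq> W M \<and>
     (\<forall>w v. w \<in> Wbot M \<and> (w, v) \<in> leq M \<longrightarrow> v \<in> Wbot M) \<and>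
     (\<forall>w v. w \<in> Wbot M \<and> (w, v) \<in> sq M \<longrightarrow> v \<in> Wbot M) \<and>
     (\<forall>p. V M p \<subseteq> W M \<and> Wbot M \<subseteq> V M p \<and>
          (\<forall>w v. w \<in> V M p \<and> (w, v) \<in> leq M \<longrightarrow> v \<in> V M p))"

fun sat :: "'w bimodel \<Rightarrow> 'w \<Rightarrow> fm \<Rightarrow> bool" where
  "sat M w (Var p) \<longleftrightarrow> w \<in> V M p"
| "sat M w Bot \<longleftrightarrow> w \<in> Wbot M"
| "sat M w (And a b) \<longleftrightarrow> sat M w a \<and> sat M w b"
| "sat M w (Or a b) \<longleftrightarrow> sat M w a \<or> sat M w b"
| "sat M w (Imp a b) \<longleftrightarrow> (\<forall>v. (w, v) \<in> leq M \<longrightarrow> sat M v a \<longrightarrow> sat M v b)"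
| "sat M w (Dia a) \<longleftrightarrow> (\<forall>u. (w, u) \<in> leq M \<longrightarrow> (\<exists>v. (u, v) \<in> sq M \<and> sat M v a))"
| "sat M w (Box a) \<longleftrightarrow> (\<forall>u v. (w, u) \<in> leq M \<longrightarrow> (u, v) \<in> sq M \<longrightarrow> sat M v a)"

definition strict :: "'w bimodel \<Rightarrow> 'w \<Rightarrow> 'w \<Rightarrow> bool" where
  "strict M w v \<longleftrightarrow> (w, v) \<in> leq M \<and> (v, w) \<notin> leq M"

definition has_chain :: "'w bimodel \<Rightarrow> 'w \<Rightarrow> nat \<Rightarrow> bool" where
  "has_chain M w k \<longleftrightarrow> (\<exists>f. f 0 = w \<and> (\<forall>i\<le>k. f i \<in> W M) \<and>
                                (\<forall>i<k. strict M (f i) (f (Suc i))))"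

definition world_height :: "'w bimodel \<Rightarrow> 'w \<Rightarrow> enat" where
  "world_height M w = Sup (enat ` {k. has_chain M w k})"

definition model_height :: "'w bimodel \<Rightarrow> enat" where
  "model_height M = Sup (world_height M ` W M)"

definition forest_like :: "'w bimodel \<Rightarrow> bool" where
  "forest_like M \<longleftrightarrow> (\<forall>w\<in>W M. \<forall>u\<in>W M. \<forall>v\<in>W M.
      (u, w) \<in> leq M \<and> (v, w) \<in> leq M \<longrightarrow> (u, v) \<in> leq M \<or> (v, u) \<in> leq M)"

definition label_pos :: "'w bimodel \<Rightarrow> fm set \<Rightarrow> 'w \<Rightarrow> fm set" where
  "label_pos M \<Sigma> w = {\<phi>\<in>\<Sigma>. sat M w \<phi>}"

definition label_dia :: "'w bimodel \<Rightarrow> fm set \<Rightarrow> 'w \<Rightarrow> fm set" where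
  "label_dia M \<Sigma> w = {\<phi>\<in>\<Sigma>. \<forall>v. (w, v) \<in> sq M \<longrightarrow> \<not> sat M v \<phi>}"

definition label :: "'w bimodel \<Rightarrow> fm set \<Rightarrow> 'w \<Rightarrow> fm set \<times> fm set" where
  "label M \<Sigma> w = (label_pos M \<Sigma> w, label_dia M \<Sigma> w)"

definition forward_confluent :: "'w bimodel \<Rightarrow> ('w \<times> 'w) set \<Rightarrow> bool" where
  "forward_confluent M R \<longleftrightarrow> (\<forall>w w' v. (w, w') \<in> leq M \<and> (w, v) \<in> R \<longrightarrow>
      (\<exists>v'. (v, v') \<in> leq M \<and> (w', v') \<in> R))"

definition backward_confluent :: "'w bimodel \<Rightarrow> ('w \<times> 'w) set \<Rightarrow> bool" where
  "backward_confluent M R \<longleftrightarrow> (\<forall>w v v'. (w, v) \<in> R \<and> (v, v') \<in> leq M \<longrightarrow>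
      (\<exists>w'. (w, w') \<in> leq M \<and> (w', v') \<in> R))"

definition downward_confluent :: "'w bimodel \<Rightarrow> ('w \<times> 'w) set \<Rightarrow> bool" where
  "downward_confluent M R \<longleftrightarrow> (\<forall>w v v'. (w, v) \<in> leq M \<and> (v, v') \<in> R \<longrightarrow>
      (\<exists>w'. (w, w') \<in> R \<and> (w', v') \<in> leq M))"

definition bisimulation :: "'w bimodel \<Rightarrow> fm set \<Rightarrow> ('w \<times> 'w) set \<Rightarrow> bool" where
  "bisimulation M \<Sigma> Z \<longleftrightarrow> Z \<subseteq> W M \<times> W M \<and>
     forward_confluent M Z \<and> backward_confluent M Z \<and>
     (\<forall>w v. (w, v) \<in> Z \<longrightarrow> label M \<Sigma> w = label M \<Sigma> v)"

definition strong_bisimulation :: "'w bimodel \<Rightarrow> fm set \<Rightarrow> ('w \<times> 'w) set \<Rightarrow> bool" where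
  "strong_bisimulation M \<Sigma> Z \<longleftrightarrow> bisimulation M \<Sigma> Z \<and>
     downward_confluent M Z \<and> downward_confluent M (Z\<inverse>)"

definition approx :: "'w bimodel \<Rightarrow> fm set \<Rightarrow> ('w \<times> 'w) set" where
  "approx M \<Sigma> = \<Union>{Z. strong_bisimulation M \<Sigma> Z}"

fun superexp :: "nat \<Rightarrow> nat \<Rightarrow> nat" where
  "superexp x 0 = x"
| "superexp x (Suc y) = 2 ^ superexp x y"

end

theory Submission imports Defs "HOL-Library.FuncSet" begin

definition clu :: "'w bimodel \<Rightarrow> 'w \<Rightarrow> 'w \<Rightarrow> bool" where
  "clu M x y \<longleftrightarrow> (x,y) \<in> leq M \<and> (y,x) \<in> leq M"
definition cov :: "'w bimodel \<Rightarrow> 'w \<Rightarrow> 'w \<Rightarrow> bool" where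
  "cov M x z \<longleftrightarrow> strict M x z \<and> \<not>(\<exists>u. strict M x u \<and> strict M u z)"
definition Lset :: "'w bimodel \<Rightarrow> fm set \<Rightarrow> 'w \<Rightarrow> (fm set \<times> fm set) set" where
  "Lset M \<Sigma> x = label M \<Sigma> ` {z. clu M x z}"

coinductive ueq :: "'w bimodel \<Rightarrow> fm set \<Rightarrow> 'w \<Rightarrow> 'w \<Rightarrow> bool" for M \<Sigma> where
  "x \<in> W M \<Longrightarrow> y \<in> W M \<Longrightarrow> Lset M \<Sigma> x = Lset M \<Sigma> y \<Longrightarrow>
   (\<forall>z\<in>{z. cov M x z}. \<exists>z'\<in>{z'. cov M y z'}. ueq M \<Sigma> z z') \<Longrightarrow>
   (\<forall>z'\<in>{z'. cov M y z'}. \<exists>z\<in>{z. cov M x z}. ueq M \<Sigma> z z') \<Longrightarrow> ueq M \<Sigma> x y"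

coinductive dm :: "'w bimodel \<Rightarrow> fm set \<Rightarrow> 'w \<Rightarrow> 'w \<Rightarrow> bool" for M \<Sigma> where
  "ueq M \<Sigma> x y \<Longrightarrow>
   (\<forall>p\<in>{p. cov M p x}. \<exists>q\<in>{q. cov M q y}. dm M \<Sigma> p q) \<Longrightarrow>
   (\<forall>q\<in>{q. cov M q y}. \<exists>p\<in>{p. cov M p x}. dm M \<Sigma> p q) \<Longrightarrow> dm M \<Sigma> x y"

definition dchain :: "'w bimodel \<Rightarrow> 'w \<Rightarrow> nat \<Rightarrow> bool" where
  "dchain M w k \<longleftrightarrow> (\<exists>f. f k = w \<and> (\<forall>i\<le>k. f i \<in> W M) \<and>
                                (\<forall>i<k. strict M (f i) (f (Suc i))))"

lemma card_factor:
  assumes "finite (h ` A)" "\<And>x y. x \<in> A \<Longrightarrow> y \<in> A \<Longrightarrow> h x = h y \<Longrightarrow> f x = f y"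
  shows "finite (f ` A) \<and> card (f ` A) \<le> card (h ` A)"
proof -
  define k where "k c = f (SOME x. x \<in> A \<and> h x = c)" for c
  have "f ` A = k ` (h ` A)"
  proof (intro set_eqI iffI)
    fix y assume "y \<in> f ` A"
    then obtain x where x: "x \<in> A" "y = f x" by blast
    have "(SOME x'. x' \<in> A \<and> h x' = h x) \<in> A \<and> h (SOME x'. x' \<in> A \<and> h x' = h x) = h x"
      by (rule someI_ex) (use x in blast)
    then have "k (h x) = f x" unfolding k_def using assms(2) x by metis
    then show "y \<in> k ` (h ` A)" using x by (metis image_eqI)
  next
    fix y assume "y \<in> k ` (h ` A)"
    then obtain x where x: "x \<in> A" "y = k (h x)" by blast
    have "(SOME x'. x' \<in> A \<and> h x' = h x) \<in> A \<and> h (SOME x'. x' \<in> A \<and> h x' = h x) = h x"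
      by (rule someI_ex) (use x in blast)
    then have "k (h x) = f x" unfolding k_def using assms(2) x by metis
    then show "y \<in> f ` A" using x by simp
  qed
  then show ?thesis using assms(1) card_image_le by simp
qed

lemma card_single: fixes D :: "'a set set" assumes "finite D"
  shows "finite ({{}} \<union> (\<lambda>c. {c}) ` D) \<and> card ({{}} \<union> (\<lambda>c. {c}) ` D) \<le> card D + 1"
proof -
  have "card ({{}} \<union> (\<lambda>c. {c}) ` D) \<le> card {{}:: 'a set} + card ((\<lambda>c. {c}) ` D)"
    using card_Un_le[of "{{}}" "(\<lambda>c. {c}) ` D"] by simp
  also have "\<dots> \<le> 1 + card D" using card_image_le assms by simp
  finally show ?thesis using assms by simp
qed

lemma card_Q: assumes "finite S"
  shows "finite {(A,B). A \<subseteq> S \<and> B \<subseteq> S \<and> A \<inter> B = {}} \<and>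
         card {(A,B). A \<subseteq> S \<and> B \<subseteq> S \<and> A \<inter> B = {}} \<le> 3 ^ card S"
proof -
  define Q where "Q = {(A,B). A \<subseteq> S \<and> B \<subseteq> S \<and> A \<inter> B = {}}"
  define h where "h = (\<lambda>(A,B). restrict (\<lambda>x. if x \<in> A then 0 else if x \<in> B then 1 else (2::nat)) S)"
  have finQ: "finite Q" using finite_subset[of Q "Pow S \<times> Pow S"] assms unfolding Q_def by auto
  have inj: "inj_on h Q"
  proof (rule inj_onI)
    fix a b assume a: "a \<in> Q" and b: "b \<in> Q" and e: "h a = h b"
    obtain A B A' B' where ab: "a = (A,B)" "b = (A',B')" by fastforce
    have 1: "(if x \<in> A then 0 else if x \<in> B then 1 else (2::nat)) =
             (if x \<in> A' then 0 else if x \<in> B' then 1 else (2::nat))" if "x \<in> S" for x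
      using fun_cong[OF e, of x] that by (simp add: h_def ab)
    have d: "A \<subseteq> S" "B \<subseteq> S" "A \<inter> B = {}" "A' \<subseteq> S" "B' \<subseteq> S" "A' \<inter> B' = {}"
      using a b unfolding ab Q_def by auto
    have 2: "x \<in> A \<longleftrightarrow> x \<in> A'" "x \<in> B \<longleftrightarrow> x \<in> B'" if "x \<in> S" for x
      using 1[OF that] d(3,6) by (auto split: if_splits)
    have "A = A'" using 2 d by blast
    moreover have "B = B'" using 2 d by blast
    ultimately show "a = b" using ab by simp
  qed
  have sub: "h ` Q \<subseteq> PiE S (\<lambda>_. {0,1,2::nat})" unfolding h_def by (auto simp: restrict_PiE_iff split: if_splits)
  have "card Q = card (h ` Q)" using card_image[OF inj] by simp
  also have "\<dots> \<le> card (PiE S (\<lambda>_. {0,1,2::nat}))"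
    using card_mono[OF _ sub] assms by (simp add: finite_PiE)
  also have "\<dots> = 3 ^ card S" using assms by (simp add: card_PiE numeral_3_eq_3)
  finally show ?thesis using finQ unfolding Q_def by simp
qed

lemma strong_inv: assumes "strong_bisimulation M \<Sigma> Z" shows "strong_bisimulation M \<Sigma> (Z\<inverse>)"
proof -
  have a: "Z \<subseteq> W M \<times> W M" "forward_confluent M Z" "backward_confluent M Z"
    "\<forall>w v. (w, v) \<in> Z \<longrightarrow> label M \<Sigma> w = label M \<Sigma> v"
    "downward_confluent M Z" "downward_confluent M (Z\<inverse>)"
    using assms unfolding strong_bisimulation_def bisimulation_def by auto
  have "Z\<inverse> \<subseteq> W M \<times> W M" using a(1) by blast
  moreover have "forward_confluent M (Z\<inverse>)" using a(3) unfolding forward_confluent_def backward_confluent_def by blast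
  moreover have "backward_confluent M (Z\<inverse>)" using a(2) unfolding forward_confluent_def backward_confluent_def by blast
  moreover have "\<forall>w v. (w, v) \<in> Z\<inverse> \<longrightarrow> label M \<Sigma> w = label M \<Sigma> v" using a(4) by auto
  moreover have "downward_confluent M (Z\<inverse>)" using a(6) .
  moreover have "downward_confluent M ((Z\<inverse>)\<inverse>)" using a(5) by simp
  ultimately show ?thesis unfolding strong_bisimulation_def bisimulation_def by blast
qed


lemma fc_comp: "forward_confluent M Z1 \<Longrightarrow> forward_confluent M Z2 \<Longrightarrow> forward_confluent M (Z1 O Z2)"
  unfolding forward_confluent_def
proof (intro allI impI)
  fix w w' v assume f1: "\<forall>w w' v. (w, w') \<in> leq M \<and> (w, v) \<in> Z1 \<longrightarrow> (\<exists>v'. (v, v') \<in> leq M \<and> (w', v') \<in> Z1)"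
    and f2: "\<forall>w w' v. (w, w') \<in> leq M \<and> (w, v) \<in> Z2 \<longrightarrow> (\<exists>v'. (v, v') \<in> leq M \<and> (w', v') \<in> Z2)"
    and h: "(w, w') \<in> leq M \<and> (w, v) \<in> Z1 O Z2"
  then obtain u where u: "(w,u) \<in> Z1" "(u,v) \<in> Z2" by blast
  obtain u' where u': "(u,u') \<in> leq M" "(w',u') \<in> Z1" using f1 h u(1) by blast
  obtain v' where v': "(v,v') \<in> leq M" "(u',v') \<in> Z2" using f2 u'(1) u(2) by blast
  show "\<exists>v'. (v, v') \<in> leq M \<and> (w', v') \<in> Z1 O Z2" using u' v' by blast
qed

lemma bc_comp: "backward_confluent M Z1 \<Longrightarrow> backward_confluent M Z2 \<Longrightarrow> backward_confluent M (Z1 O Z2)"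
  unfolding backward_confluent_def
proof (intro allI impI)
  fix w v v' assume f1: "\<forall>w v v'. (w, v) \<in> Z1 \<and> (v, v') \<in> leq M \<longrightarrow> (\<exists>w'. (w, w') \<in> leq M \<and> (w', v') \<in> Z1)"
    and f2: "\<forall>w v v'. (w, v) \<in> Z2 \<and> (v, v') \<in> leq M \<longrightarrow> (\<exists>w'. (w, w') \<in> leq M \<and> (w', v') \<in> Z2)"
    and h: "(w, v) \<in> Z1 O Z2 \<and> (v, v') \<in> leq M"
  then obtain u where u: "(w,u) \<in> Z1" "(u,v) \<in> Z2" by blast
  obtain u' where u': "(u,u') \<in> leq M" "(u',v') \<in> Z2" using f2 h u(2) by blast
  obtain w' where w': "(w,w') \<in> leq M" "(w',u') \<in> Z1" using f1 u'(1) u(1) by blast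
  show "\<exists>w'. (w, w') \<in> leq M \<and> (w', v') \<in> Z1 O Z2" using u' w' by blast
qed

lemma dc_comp: "downward_confluent M Z1 \<Longrightarrow> downward_confluent M Z2 \<Longrightarrow> downward_confluent M (Z1 O Z2)"
  unfolding downward_confluent_def
proof (intro allI impI)
  fix w v v' assume f1: "\<forall>w v v'. (w, v) \<in> leq M \<and> (v, v') \<in> Z1 \<longrightarrow> (\<exists>w'. (w, w') \<in> Z1 \<and> (w', v') \<in> leq M)"
    and f2: "\<forall>w v v'. (w, v) \<in> leq M \<and> (v, v') \<in> Z2 \<longrightarrow> (\<exists>w'. (w, w') \<in> Z2 \<and> (w', v') \<in> leq M)"
    and h: "(w, v) \<in> leq M \<and> (v, v') \<in> Z1 O Z2"
  then obtain u where u: "(v,u) \<in> Z1" "(u,v') \<in> Z2" by blast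
  obtain w1 where w1: "(w,w1) \<in> Z1" "(w1,u) \<in> leq M" using f1 h u(1) by blast
  obtain w2 where w2: "(w1,w2) \<in> Z2" "(w2,v') \<in> leq M" using f2 w1(2) u(2) by blast
  show "\<exists>w'. (w, w') \<in> Z1 O Z2 \<and> (w', v') \<in> leq M" using w1 w2 by blast
qed

lemma strong_comp: assumes "strong_bisimulation M \<Sigma> Z1" "strong_bisimulation M \<Sigma> Z2"
  shows "strong_bisimulation M \<Sigma> (Z1 O Z2)"
proof -
  have a: "Z1 \<subseteq> W M \<times> W M" "forward_confluent M Z1" "backward_confluent M Z1"
    "\<forall>w v. (w, v) \<in> Z1 \<longrightarrow> label M \<Sigma> w = label M \<Sigma> v"
    "downward_confluent M Z1" "downward_confluent M (Z1\<inverse>)"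
    using assms(1) unfolding strong_bisimulation_def bisimulation_def by auto
  have b: "Z2 \<subseteq> W M \<times> W M" "forward_confluent M Z2" "backward_confluent M Z2"
    "\<forall>w v. (w, v) \<in> Z2 \<longrightarrow> label M \<Sigma> w = label M \<Sigma> v"
    "downward_confluent M Z2" "downward_confluent M (Z2\<inverse>)"
    using assms(2) unfolding strong_bisimulation_def bisimulation_def by auto
  have "Z1 O Z2 \<subseteq> W M \<times> W M" using a(1) b(1) by blast
  moreover have "forward_confluent M (Z1 O Z2)" using fc_comp a(2) b(2) .
  moreover have "backward_confluent M (Z1 O Z2)" using bc_comp a(3) b(3) .
  moreover have "\<forall>w v. (w, v) \<in> Z1 O Z2 \<longrightarrow> label M \<Sigma> w = label M \<Sigma> v" using a(4) b(4) by auto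
  moreover have "downward_confluent M (Z1 O Z2)" using dc_comp a(5) b(5) .
  moreover have "downward_confluent M ((Z1 O Z2)\<inverse>)" using dc_comp[OF b(6) a(6)] by (simp add: converse_relcomp)
  ultimately show ?thesis unfolding strong_bisimulation_def bisimulation_def by blast
qed

lemma approxI: "strong_bisimulation M \<Sigma> Z \<Longrightarrow> (x,y) \<in> Z \<Longrightarrow> (x,y) \<in> approx M \<Sigma>"
  unfolding approx_def by blast
lemma approxE: assumes "(x,y) \<in> approx M \<Sigma>"
  obtains Z where "strong_bisimulation M \<Sigma> Z" "(x,y) \<in> Z"
  using assms unfolding approx_def by blast

lemma approx_eq: assumes "strong_bisimulation M \<Sigma> Z" "(x,y) \<in> Z"
  shows "approx M \<Sigma> `` {x} = approx M \<Sigma> `` {y}"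
proof
  show "approx M \<Sigma> `` {x} \<subseteq> approx M \<Sigma> `` {y}"
  proof
    fix z assume "z \<in> approx M \<Sigma> `` {x}"
    then have "(x,z) \<in> approx M \<Sigma>" by (rule ImageE) simp
    then obtain Z' where Z': "strong_bisimulation M \<Sigma> Z'" "(x,z) \<in> Z'" by (rule approxE)
    have 1: "(y,z) \<in> Z\<inverse> O Z'" using Z'(2) assms(2) by (intro relcompI[of _ x]) simp_all
    have 2: "strong_bisimulation M \<Sigma> (Z\<inverse> O Z')" using strong_comp[OF strong_inv[OF assms(1)] Z'(1)] .
    have "(y,z) \<in> approx M \<Sigma>" using approxI[OF 2 1] .
    then show "z \<in> approx M \<Sigma> `` {y}" by (rule ImageI) simp
  qed
  show "approx M \<Sigma> `` {y} \<subseteq> approx M \<Sigma> `` {x}"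
  proof
    fix z assume "z \<in> approx M \<Sigma> `` {y}"
    then have "(y,z) \<in> approx M \<Sigma>" by (rule ImageE) simp
    then obtain Z' where Z': "strong_bisimulation M \<Sigma> Z'" "(y,z) \<in> Z'" by (rule approxE)
    have 1: "(x,z) \<in> Z O Z'" using Z'(2) assms(2) by (intro relcompI[of _ y]) simp_all
    have 2: "strong_bisimulation M \<Sigma> (Z O Z')" using strong_comp[OF assms(1) Z'(1)] .
    have "(x,z) \<in> approx M \<Sigma>" using approxI[OF 2 1] .
    then show "z \<in> approx M \<Sigma> `` {x}" by (rule ImageI) simp
  qed
qed

lemma quot_bound:
  assumes "strong_bisimulation M \<Sigma> Z" "\<And>x y. x \<in> W M \<Longrightarrow> y \<in> W M \<Longrightarrow> g x = g y \<Longrightarrow> (x,y) \<in> Z"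
    "finite (g ` W M)"
  shows "finite (W M // approx M \<Sigma>) \<and> card (W M // approx M \<Sigma>) \<le> card (g ` W M)"
proof -
  have e: "W M // approx M \<Sigma> = (\<lambda>x. approx M \<Sigma> `` {x}) ` W M" unfolding quotient_def by blast
  have "finite ((\<lambda>x. approx M \<Sigma> `` {x}) ` W M) \<and> card ((\<lambda>x. approx M \<Sigma> `` {x}) ` W M) \<le> card (g ` W M)"
  proof (rule card_factor[OF assms(3)])
    fix x y assume "x \<in> W M" "y \<in> W M" "g x = g y"
    then show "approx M \<Sigma> `` {x} = approx M \<Sigma> `` {y}" using approx_eq[OF assms(1) assms(2)] by blast
  qed
  then show ?thesis unfolding e .
qed


lemma se_ge: "x \<le> superexp x j"
proof (induction j)
  case (Suc j)
  have "superexp x j < 2 ^ superexp x j" by (rule less_exp)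
  then have "x < 2 ^ superexp x j" using Suc.IH by linarith
  then show ?case by simp
qed simp

lemma se_mono_x: "x \<le> y \<Longrightarrow> superexp x j \<le> superexp y j"
  by (induction j) (auto intro: power_increasing)

lemma se_Suc: "superexp x j \<le> superexp x (Suc j)"
  using less_exp[of "superexp x j"] by simp

lemma se_mono_j: "j \<le> j' \<Longrightarrow> superexp x j \<le> superexp x j'"
proof (induction j' rule: dec_induct)
  case (step k) then show ?case using se_Suc le_trans by blast
qed simp

lemma se_mono: "x \<le> y \<Longrightarrow> j \<le> j' \<Longrightarrow> superexp x j \<le> superexp y j'"
  using se_mono_x se_mono_j le_trans by blast

lemma se_pos: "1 \<le> superexp x (Suc j)" by simp

lemma se_double: "2 * superexp x (Suc j) \<le> superexp (Suc x) (Suc j)"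
proof (induction j)
  case 0 then show ?case by simp
next
  case (Suc j)
  let ?A = "superexp x (Suc j)"
  have "1 \<le> ?A" by (rule se_pos)
  have "2 * superexp x (Suc (Suc j)) = 2 ^ (?A + 1)" by simp
  also have "\<dots> \<le> 2 ^ (2 * ?A)" using \<open>1 \<le> ?A\<close> by (intro power_increasing) simp_all
  also have "\<dots> \<le> 2 ^ superexp (Suc x) (Suc j)" using Suc.IH by (intro power_increasing) simp_all
  finally show ?case by simp
qed

lemma se_pow: "superexp x (Suc (Suc (Suc j))) ^ superexp x (Suc (Suc j)) \<le> superexp (Suc x) (Suc (Suc (Suc j)))"
proof -
  let ?A = "superexp x (Suc (Suc j))"
  have "superexp x (Suc (Suc (Suc j))) ^ ?A = 2 ^ (?A * ?A)" by (simp add: power_mult)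
  also have "?A * ?A = 2 ^ (2 * superexp x (Suc j))" by (simp add: power_mult[symmetric] mult_2 power_add)
  also have "2 ^ (2 ^ (2 * superexp x (Suc j))) \<le> (2::nat) ^ (2 ^ superexp (Suc x) (Suc j))"
    using se_double[of x j] by (intro power_increasing) simp_all
  finally show ?thesis by simp
qed

lemma two_pow_ge: "n \<le> 2 ^ (n - 1)" for n :: nat
proof (induction n)
  case (Suc n)
  show ?case
  proof (cases n)
    case 0 then show ?thesis by simp
  next
    case (Suc m)
    then have e: "(2::nat) ^ (Suc n - 1) = 2 * 2 ^ (n - 1)" by simp
    show ?thesis unfolding e using Suc.IH \<open>n = Suc m\<close> by simp
  qed
qed simp

lemma three_four: "2 * 3 ^ s \<le> 4 ^ s + (2::nat)"
proof (induction s)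
  case (Suc s)
  show ?case
  proof (cases s)
    case 0 then show ?thesis by simp
  next
    case (Suc s')
    have "4 \<le> (4::nat) ^ s" using Suc by simp
    then show ?thesis using Suc.IH by simp
  qed
qed simp

lemma arith_n0: assumes "p \<le> 3 ^ s" shows "p * 2 ^ (p - 1) \<le> superexp (2 * s) 2"
proof -
  let ?t = "(3::nat) ^ s"
  have t1: "1 \<le> ?t" by simp
  have "p * 2 ^ (p - 1) \<le> ?t * 2 ^ (?t - 1)"
    using assms by (intro mult_le_mono power_increasing) simp_all
  also have "\<dots> \<le> 2 ^ (?t - 1) * 2 ^ (?t - 1)" using two_pow_ge[of ?t] by simp
  also have "\<dots> = 2 ^ (2 * ?t - 2)" using t1 by (simp add: power_add[symmetric])
  also have "\<dots> \<le> 2 ^ (4 ^ s)" using three_four[of s] by (intro power_increasing) simp_all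
  also have "\<dots> = superexp (2 * s) 2"
  proof -
    have "(4::nat) ^ s = 2 ^ (2 * s)" by (simp add: power_mult)
    then show ?thesis by (simp add: numeral_2_eq_2)
  qed
  finally show ?thesis .
qed


lemma arith_main:
  fixes p s n :: nat and u d :: "nat \<Rightarrow> nat"
  assumes s1: "1 \<le> s" and p3: "p \<le> 3 ^ s" and u0: "u 0 = 0" and uS: "\<And>k. u (Suc k) \<le> 2 ^ p * 2 ^ u k"
    and d0: "d 0 = 0" and dS: "\<And>k. d (Suc k) \<le> u (Suc n) * (d k + 1)"
  shows "p * 2 ^ (p - 1) * 2 ^ (u n) * (d n + 1) \<le> superexp (2 * (n + 1) * s) (n + 2)"
proof (cases n)
  case 0
  then show ?thesis using arith_n0[OF p3] u0 d0 by (simp add: numeral_2_eq_2)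
next
  case (Suc m)
  have four: "(4::nat) ^ s = 2 ^ (2 * s)" by (simp add: power_mult)
  have p4: "p \<le> 4 ^ s" using p3 power_mono[of "3::nat" 4 s] by simp
  have pse: "p \<le> superexp (2 * s) 1" using p4 four by simp
  have U: "u (Suc k) \<le> superexp (2 * s + k) (k + 2)" for k
  proof (induction k)
    case 0
    have "u (Suc 0) \<le> 2 ^ p" using uS[of 0] u0 by simp
    also have "\<dots> \<le> 2 ^ (4 ^ s)" using p4 by (intro power_increasing) simp_all
    also have "\<dots> = superexp (2 * s + 0) (0 + 2)" using four by (simp add: numeral_2_eq_2)
    finally show ?case .
  next
    case (Suc k)
    have "p \<le> superexp (2 * s + k) (k + 2)" using pse se_mono[of "2*s" "2*s+k" 1 "k+2"] by (meson le_trans le_add1 one_le_numeral add_leE order.refl)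
    then have "p + u (Suc k) \<le> 2 * superexp (2 * s + k) (Suc (k + 1))" using Suc.IH by simp
    also have "\<dots> \<le> superexp (Suc (2 * s + k)) (Suc (k + 1))" by (rule se_double)
    finally have pu: "p + u (Suc k) \<le> superexp (2 * s + Suc k) (k + 2)" by simp
    have "u (Suc (Suc k)) \<le> 2 ^ (p + u (Suc k))" using uS[of "Suc k"] by (simp add: power_add)
    also have "\<dots> \<le> 2 ^ superexp (2 * s + Suc k) (k + 2)"
      using pu by (intro power_increasing) simp_all
    finally show ?case by simp
  qed
  define X where "X = superexp (2 * s + n) (n + 2)"
  have X2: "2 \<le> X" unfolding X_def using se_ge[of "2*s+n" "n+2"] s1 by simp
  have uX: "u (Suc n) \<le> X" using U[of n] unfolding X_def .
  have un: "2 ^ u n \<le> X"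
  proof -
    have "u n \<le> superexp (2 * s + m) (m + 2)" using U[of m] Suc by simp
    then have "2 ^ u n \<le> (2::nat) ^ superexp (2 * s + m) (m + 2)" by (intro power_increasing) simp_all
    also have "\<dots> = superexp (2 * s + m) (m + 3)" by (simp add: numeral_3_eq_3 numeral_2_eq_2)
    also have "\<dots> \<le> X" unfolding X_def using Suc by (intro se_mono) simp_all
    finally show ?thesis .
  qed
  have D: "d k + 1 \<le> (X + 1) ^ k" for k
  proof (induction k)
    case (Suc k)
    have "d (Suc k) + 1 \<le> X * (d k + 1) + 1" using dS[of k] uX mult_le_mono1[OF uX, of "d k + 1"] by linarith
    also have "\<dots> \<le> X * (X + 1) ^ k + (X + 1) ^ k" using Suc.IH by (intro add_mono mult_le_mono2) simp_all
    also have "\<dots> = (X + 1) ^ Suc k" by (simp add: algebra_simps)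
    finally show ?case .
  qed (simp add: d0)
  have pp: "p * 2 ^ (p - 1) \<le> X"
  proof -
    have "p * 2 ^ (p - 1) \<le> 2 ^ p * 2 ^ p" using less_exp[of p]
      by (intro mult_le_mono power_increasing) simp_all
    also have "\<dots> = 2 ^ (2 * p)" by (simp add: mult_2 power_add)
    also have "\<dots> \<le> 2 ^ (2 * 2 ^ (2 * s))" using p4 four by (intro power_increasing) simp_all
    also have "\<dots> = superexp (2 * s + 1) 2" by (simp add: numeral_2_eq_2)
    also have "\<dots> \<le> X" unfolding X_def using Suc by (intro se_mono) simp_all
    finally show ?thesis .
  qed
  have "p * 2 ^ (p - 1) * 2 ^ (u n) * (d n + 1) \<le> X * X * (X + 1) ^ n"
    using pp un D[of n] by (intro mult_le_mono) simp_all
  also have "\<dots> \<le> (X + 1) * (X + 1) * (X + 1) ^ n" by (intro mult_le_mono) simp_all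
  also have "\<dots> = (X + 1) ^ (n + 2)" by (simp add: algebra_simps)
  also have "\<dots> \<le> (X * X) ^ (n + 2)"
  proof -
    have "X + 1 \<le> X * X" using X2 mult_le_mono1[OF X2, of X] by linarith
    then show ?thesis by (intro power_mono) simp_all
  qed
  also have "\<dots> = X ^ (2 * n + 4)"
  proof -
    have "(X * X) ^ (n + 2) = (X ^ 2) ^ (n + 2)" by (simp add: power2_eq_square)
    also have "\<dots> = X ^ (2 * (n + 2))" by (simp only: power_mult)
    also have "2 * (n + 2) = 2 * n + 4" by simp
    finally show ?thesis .
  qed
  also have "\<dots> \<le> X ^ superexp (2 * s + n) (n + 1)"
  proof -
    have "2 * n + 4 \<le> 2 ^ (n + 2)"
    proof -
      have "n < 2 ^ n" by (rule less_exp)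
      then have "n + 1 \<le> 2 ^ n" by linarith
      then show ?thesis by simp
    qed
    also have "\<dots> \<le> 2 ^ (2 * s + n)" using s1 by (intro power_increasing) simp_all
    also have "\<dots> = superexp (2 * s + n) 1" by simp
    also have "\<dots> \<le> superexp (2 * s + n) (n + 1)" by (intro se_mono_j) simp
    finally show ?thesis using X2 by (intro power_increasing) simp_all
  qed
  also have "\<dots> \<le> superexp (Suc (2 * s + n)) (n + 2)"
    using se_pow[of "2 * s + n" m] Suc unfolding X_def by (simp add: numeral_3_eq_3)
  also have "\<dots> \<le> superexp (2 * (n + 1) * s) (n + 2)"
  proof (intro se_mono_x)
    have "n + 1 \<le> 2 * n" using Suc by simp
    also have "\<dots> \<le> 2 * n * s" using s1 by simp
    finally have "n + 1 \<le> 2 * n * s" .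
    then show "Suc (2 * s + n) \<le> 2 * (n + 1) * s" by (simp add: algebra_simps)
  qed
  finally show ?thesis .
qed


locale fl =
  fixes M :: "'w bimodel" and \<Sigma> :: "fm set" and n :: nat
  assumes bm: "is_bimodel M" and fo: "forest_like M" and ht: "model_height M = enat n"
begin

abbreviation le where "le x y \<equiv> (x,y) \<in> leq M"
abbreviation st where "st x y \<equiv> strict M x y"

lemma leW: "le x y \<Longrightarrow> x \<in> W M \<and> y \<in> W M"
  using bm unfolding is_bimodel_def by blast
lemma le_refl: "x \<in> W M \<Longrightarrow> le x x"
  using bm unfolding is_bimodel_def refl_on_def by blast
lemma le_trans: "le x y \<Longrightarrow> le y z \<Longrightarrow> le x z"
  using bm unfolding is_bimodel_def trans_def by blast
lemma sq_refl: "x \<in> W M \<Longrightarrow> (x,x) \<in> sq M"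
  using bm unfolding is_bimodel_def refl_on_def by blast

lemma chain_le: assumes "has_chain M x k" shows "k \<le> n"
proof -
  have xW: "x \<in> W M" using assms unfolding has_chain_def by force
  have "enat k \<le> world_height M x" unfolding world_height_def
    using assms by (intro Sup_upper) auto
  also have "\<dots> \<le> model_height M" unfolding model_height_def
    using xW by (intro Sup_upper) auto
  finally show ?thesis using ht by simp
qed

lemma chain0: "x \<in> W M \<Longrightarrow> has_chain M x 0"
  unfolding has_chain_def by (rule exI[of _ "\<lambda>_. x"]) auto

lemma chain_step: assumes "st x y" "has_chain M y k" shows "has_chain M x (Suc k)"
proof -
  obtain f where f: "f 0 = y" "\<forall>i\<le>k. f i \<in> W M" "\<forall>i<k. st (f i) (f (Suc i))"
    using assms(2) unfolding has_chain_def by blast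
  define g where "g i = (if i = 0 then x else f (i - 1))" for i
  have xW: "x \<in> W M" using assms(1) leW unfolding strict_def by blast
  have "\<forall>i\<le>Suc k. g i \<in> W M" using f xW unfolding g_def by auto
  moreover have "\<forall>i<Suc k. st (g i) (g (Suc i))"
  proof (intro allI impI)
    fix i assume "i < Suc k"
    then show "st (g i) (g (Suc i))" using f assms(1) unfolding g_def
      by (cases i) auto
  qed
  ultimately show ?thesis unfolding has_chain_def g_def by (intro exI[of _ g]) (auto simp: g_def)
qed

definition hgt where "hgt x = Max {k. has_chain M x k}"

lemma hgt: assumes "x \<in> W M" shows "has_chain M x (hgt x)" "hgt x \<le> n"
  "\<And>k. has_chain M x k \<Longrightarrow> k \<le> hgt x"
proof -
  have fin: "finite {k. has_chain M x k}" using chain_le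
    by (metis (mono_tags) finite_nat_set_iff_bounded_le mem_Collect_eq)
  have ne: "{k. has_chain M x k} \<noteq> {}" using chain0 assms by auto
  show "has_chain M x (hgt x)" unfolding hgt_def using Max_in[OF fin ne] by simp
  then show "hgt x \<le> n" using chain_le by blast
  show "\<And>k. has_chain M x k \<Longrightarrow> k \<le> hgt x" unfolding hgt_def using fin by simp
qed

lemma stW: "st x y \<Longrightarrow> x \<in> W M \<and> y \<in> W M" using leW unfolding strict_def by blast

lemma hgt_st: assumes "st x y" shows "hgt y < hgt x"
proof -
  have "has_chain M x (Suc (hgt y))" using chain_step assms hgt(1) stW by blast
  then show ?thesis using hgt(3) stW assms by fastforce
qed

lemma dchain_le: assumes "dchain M x k" shows "k \<le> n"
  using assms chain_le unfolding dchain_def has_chain_def by blast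

lemma dchain0: "x \<in> W M \<Longrightarrow> dchain M x 0"
  unfolding dchain_def by (rule exI[of _ "\<lambda>_. x"]) auto

lemma dchain_step: assumes "st y x" "dchain M y k" shows "dchain M x (Suc k)"
proof -
  obtain f where f: "f k = y" "\<forall>i\<le>k. f i \<in> W M" "\<forall>i<k. st (f i) (f (Suc i))"
    using assms(2) unfolding dchain_def by blast
  define g where "g i = (if i = Suc k then x else f i)" for i
  have xW: "x \<in> W M" using assms(1) stW by blast
  have "\<forall>i\<le>Suc k. g i \<in> W M" using f xW unfolding g_def by (auto simp: le_Suc_eq)
  moreover have "\<forall>i<Suc k. st (g i) (g (Suc i))"
  proof (intro allI impI)
    fix i assume "i < Suc k"
    then show "st (g i) (g (Suc i))" using f assms(1) unfolding g_def
      by (cases "i = k") auto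
  qed
  moreover have "g (Suc k) = x" by (simp add: g_def)
  ultimately show ?thesis unfolding dchain_def by blast
qed

definition dh where "dh x = Max {k. dchain M x k}"

lemma dh: assumes "x \<in> W M" shows "dchain M x (dh x)" "dh x \<le> n"
  "\<And>k. dchain M x k \<Longrightarrow> k \<le> dh x"
proof -
  have fin: "finite {k. dchain M x k}" using dchain_le
    by (metis (mono_tags) finite_nat_set_iff_bounded_le mem_Collect_eq)
  have ne: "{k. dchain M x k} \<noteq> {}" using dchain0 assms by auto
  show "dchain M x (dh x)" unfolding dh_def using Max_in[OF fin ne] by simp
  then show "dh x \<le> n" using dchain_le by blast
  show "\<And>k. dchain M x k \<Longrightarrow> k \<le> dh x" unfolding dh_def using fin by simp
qed

lemma dh_st: assumes "st y x" shows "dh y < dh x"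
proof -
  have "dchain M x (Suc (dh y))" using dchain_step assms dh(1) stW by blast
  then show ?thesis using dh(3) stW assms by fastforce
qed


lemma st_le: "st x y \<Longrightarrow> le y z \<Longrightarrow> st x z"
  unfolding strict_def using le_trans by blast
lemma le_st: "le x y \<Longrightarrow> st y z \<Longrightarrow> st x z"
  unfolding strict_def using le_trans by blast
lemma clu_sym: "clu M x y \<Longrightarrow> clu M y x" unfolding clu_def by blast
lemma clu_trans: "clu M x y \<Longrightarrow> clu M y z \<Longrightarrow> clu M x z" unfolding clu_def using le_trans by blast
lemma clu_refl: "x \<in> W M \<Longrightarrow> clu M x x" unfolding clu_def using le_refl by blast
lemma cluW: "clu M x y \<Longrightarrow> x \<in> W M \<and> y \<in> W M" unfolding clu_def using leW by blast

lemma cov_clu_r: "clu M x x' \<Longrightarrow> cov M p x \<Longrightarrow> cov M p x'"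
  unfolding cov_def clu_def using st_le by blast
lemma cov_clu_l: "clu M p p' \<Longrightarrow> cov M p x \<Longrightarrow> cov M p' x"
  unfolding cov_def clu_def using le_st by blast
lemma cov_st: "cov M x y \<Longrightarrow> st x y" unfolding cov_def by blast

lemma cov_below: assumes "cov M p x" "le q x" shows "le q p \<or> clu M q x"
proof -
  have W: "p \<in> W M" "x \<in> W M" "q \<in> W M" using assms leW cov_st stW by blast+
  have "le p x" using assms cov_st unfolding strict_def by blast
  then have "le q p \<or> le p q" using fo W assms(2) unfolding forest_like_def by blast
  moreover
  { assume "le p q" "\<not> le q p"
    then have "st p q" unfolding strict_def by blast
    have "le x q"
    proof (rule ccontr)
      assume "\<not> le x q" then have "st q x" using assms(2) unfolding strict_def by blast
      then show False using \<open>st p q\<close> assms(1) unfolding cov_def by blast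
    qed
    then have "clu M q x" using assms(2) unfolding clu_def by blast }
  ultimately show ?thesis by blast
qed

lemma cov_unique: assumes "cov M p x" "cov M q x" shows "clu M p q"
proof -
  have "le q p"
    using cov_below[OF assms(1)] assms(2) cov_st unfolding strict_def clu_def by blast
  moreover have "le p q"
    using cov_below[OF assms(2)] assms(1) cov_st unfolding strict_def clu_def by blast
  ultimately show ?thesis unfolding clu_def by blast
qed

lemma cov_up: "st x u \<Longrightarrow> \<exists>z. cov M x z \<and> le z u"
proof (induction "n - hgt u" arbitrary: u rule: less_induct)
  case less
  show ?case
  proof (cases "cov M x u")
    case True then show ?thesis using le_refl stW less.prems by blast
  next
    case False
    then obtain y where y: "st x y" "st y u" using less.prems unfolding cov_def by blast
    have "hgt u < hgt y" "hgt y \<le> n" using hgt_st[OF y(2)] hgt(2) stW y by auto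
    then have "n - hgt y < n - hgt u" by arith
    then obtain z where "cov M x z" "le z y" using less.hyps[of y] y by auto
    then show ?thesis using y(2) le_trans unfolding strict_def by blast
  qed
qed

lemma cov_down: "st p x \<Longrightarrow> \<exists>q. cov M q x \<and> le p q"
proof (induction "hgt p" arbitrary: p rule: less_induct)
  case less
  show ?case
  proof (cases "cov M p x")
    case True then show ?thesis using le_refl stW less.prems by blast
  next
    case False
    then obtain y where y: "st p y" "st y x" using less.prems unfolding cov_def by blast
    have "hgt y < hgt p" using hgt_st[OF y(1)] by auto
    then obtain q where "cov M q x" "le y q" using less.hyps[of y] y by auto
    then show ?thesis using y(1) le_trans unfolding strict_def by blast
  qed
qed

lemma ueqW: "ueq M \<Sigma> x y \<Longrightarrow> x \<in> W M \<and> y \<in> W M" by (erule ueq.cases) auto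

lemma ueq_clu: "clu M a b \<Longrightarrow> ueq M \<Sigma> a b"
proof (erule ueq.coinduct)
  fix x y assume c: "clu M x y"
  have "Lset M \<Sigma> x = Lset M \<Sigma> y" unfolding Lset_def using c clu_trans clu_sym
    by (metis (mono_tags, lifting) Collect_cong)
  moreover have "\<forall>z\<in>{z. cov M x z}. \<exists>z'\<in>{z'. cov M y z'}. clu M z z' \<or> ueq M \<Sigma> z z'"
    using c cov_clu_l clu_refl cov_st stW by blast
  moreover have "\<forall>z'\<in>{z'. cov M y z'}. \<exists>z\<in>{z. cov M x z}. clu M z z' \<or> ueq M \<Sigma> z z'"
    using c cov_clu_l clu_refl cov_st stW clu_sym by blast
  ultimately show "\<exists>x' y'. x = x' \<and> y = y' \<and> x' \<in> W M \<and> y' \<in> W M \<and> Lset M \<Sigma> x' = Lset M \<Sigma> y' \<and>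
     (\<forall>z\<in>{z. cov M x' z}. \<exists>z'\<in>{z'. cov M y' z'}. clu M z z' \<or> ueq M \<Sigma> z z') \<and>
     (\<forall>z'\<in>{z'. cov M y' z'}. \<exists>z\<in>{z. cov M x' z}. clu M z z' \<or> ueq M \<Sigma> z z')"
    using c cluW by blast
qed

lemma ueq_sym: "ueq M \<Sigma> a b \<Longrightarrow> ueq M \<Sigma> b a"
proof (rule ueq.coinduct[where X="\<lambda>x y. ueq M \<Sigma> y x"])
  fix x y assume "ueq M \<Sigma> y x"
  then have h: "y \<in> W M" "x \<in> W M" "Lset M \<Sigma> y = Lset M \<Sigma> x"
    "\<forall>z\<in>{z. cov M y z}. \<exists>z'\<in>{z'. cov M x z'}. ueq M \<Sigma> z z'"
    "\<forall>z'\<in>{z'. cov M x z'}. \<exists>z\<in>{z. cov M y z}. ueq M \<Sigma> z z'"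
    by (auto elim: ueq.cases)
  show "\<exists>x' y'. x = x' \<and> y = y' \<and> x' \<in> W M \<and> y' \<in> W M \<and> Lset M \<Sigma> x' = Lset M \<Sigma> y' \<and>
     (\<forall>z\<in>{z. cov M x' z}. \<exists>z'\<in>{z'. cov M y' z'}. ueq M \<Sigma> z' z \<or> ueq M \<Sigma> z z') \<and>
     (\<forall>z'\<in>{z'. cov M y' z'}. \<exists>z\<in>{z. cov M x' z}. ueq M \<Sigma> z' z \<or> ueq M \<Sigma> z z')"
    apply (rule exI[of _ x], rule exI[of _ y])
    using h by metis
qed

lemma ueq_trans: "ueq M \<Sigma> a b \<Longrightarrow> ueq M \<Sigma> b c \<Longrightarrow> ueq M \<Sigma> a c"
proof (rule ueq.coinduct[where X="\<lambda>x y. \<exists>m. ueq M \<Sigma> x m \<and> ueq M \<Sigma> m y"])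
  show "\<exists>m. ueq M \<Sigma> a m \<and> ueq M \<Sigma> m c" if "ueq M \<Sigma> a b" "ueq M \<Sigma> b c" using that by blast
  fix x y assume "\<exists>m. ueq M \<Sigma> x m \<and> ueq M \<Sigma> m y"
  then obtain m where 1: "ueq M \<Sigma> x m" and 2: "ueq M \<Sigma> m y" by blast
  from 1 2 show "\<exists>x' y'. x = x' \<and> y = y' \<and> x' \<in> W M \<and> y' \<in> W M \<and> Lset M \<Sigma> x' = Lset M \<Sigma> y' \<and>
     (\<forall>z\<in>{z. cov M x' z}. \<exists>z'\<in>{z'. cov M y' z'}. (\<exists>m. ueq M \<Sigma> z m \<and> ueq M \<Sigma> m z') \<or> ueq M \<Sigma> z z') \<and>
     (\<forall>z'\<in>{z'. cov M y' z'}. \<exists>z\<in>{z. cov M x' z}. (\<exists>m. ueq M \<Sigma> z m \<and> ueq M \<Sigma> m z') \<or> ueq M \<Sigma> z z')"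
    by (auto elim!: ueq.cases) (metis mem_Collect_eq)+
qed

lemma dm_ueq: "dm M \<Sigma> x y \<Longrightarrow> ueq M \<Sigma> x y" by (erule dm.cases) auto

lemma dm_clu: "clu M a b \<Longrightarrow> dm M \<Sigma> a b"
proof (erule dm.coinduct)
  fix x y assume c: "clu M x y"
  have "\<forall>z\<in>{z. cov M z x}. \<exists>z'\<in>{z'. cov M z' y}. clu M z z' \<or> dm M \<Sigma> z z'"
    using c cov_clu_r clu_refl cov_st stW by blast
  moreover have "\<forall>z'\<in>{z'. cov M z' y}. \<exists>z\<in>{z. cov M z x}. clu M z z' \<or> dm M \<Sigma> z z'"
    using c cov_clu_r clu_refl cov_st stW clu_sym by blast
  ultimately show "\<exists>x' y'. x = x' \<and> y = y' \<and> ueq M \<Sigma> x' y' \<and>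
     (\<forall>z\<in>{z. cov M z x'}. \<exists>z'\<in>{z'. cov M z' y'}. clu M z z' \<or> dm M \<Sigma> z z') \<and>
     (\<forall>z'\<in>{z'. cov M z' y'}. \<exists>z\<in>{z. cov M z x'}. clu M z z' \<or> dm M \<Sigma> z z')"
    using c ueq_clu by blast
qed

lemma dm_sym: "dm M \<Sigma> a b \<Longrightarrow> dm M \<Sigma> b a"
proof (rule dm.coinduct[where X="\<lambda>x y. dm M \<Sigma> y x"])
  fix x y assume "dm M \<Sigma> y x"
  then have h: "ueq M \<Sigma> y x"
    "\<forall>z\<in>{z. cov M z y}. \<exists>z'\<in>{z'. cov M z' x}. dm M \<Sigma> z z'"
    "\<forall>z'\<in>{z'. cov M z' x}. \<exists>z\<in>{z. cov M z y}. dm M \<Sigma> z z'"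
    by (auto elim: dm.cases)
  show "\<exists>x' y'. x = x' \<and> y = y' \<and> ueq M \<Sigma> x' y' \<and>
     (\<forall>z\<in>{z. cov M z x'}. \<exists>z'\<in>{z'. cov M z' y'}. dm M \<Sigma> z' z \<or> dm M \<Sigma> z z') \<and>
     (\<forall>z'\<in>{z'. cov M z' y'}. \<exists>z\<in>{z. cov M z x'}. dm M \<Sigma> z' z \<or> dm M \<Sigma> z z')"
    apply (rule exI[of _ x], rule exI[of _ y])
    using h ueq_sym by metis
qed

lemma dm_trans: "dm M \<Sigma> a b \<Longrightarrow> dm M \<Sigma> b c \<Longrightarrow> dm M \<Sigma> a c"
proof (rule dm.coinduct[where X="\<lambda>x y. \<exists>m. dm M \<Sigma> x m \<and> dm M \<Sigma> m y"])
  show "\<exists>m. dm M \<Sigma> a m \<and> dm M \<Sigma> m c" if "dm M \<Sigma> a b" "dm M \<Sigma> b c" using that by blast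
  fix x y assume "\<exists>m. dm M \<Sigma> x m \<and> dm M \<Sigma> m y"
  then obtain m where 1: "dm M \<Sigma> x m" and 2: "dm M \<Sigma> m y" by blast
  have "ueq M \<Sigma> x y" using 1 2 dm_ueq ueq_trans by blast
  with 1 2 show "\<exists>x' y'. x = x' \<and> y = y' \<and> ueq M \<Sigma> x' y' \<and>
     (\<forall>z\<in>{z. cov M z x'}. \<exists>z'\<in>{z'. cov M z' y'}. (\<exists>m. dm M \<Sigma> z m \<and> dm M \<Sigma> m z') \<or> dm M \<Sigma> z z') \<and>
     (\<forall>z'\<in>{z'. cov M z' y'}. \<exists>z\<in>{z. cov M z x'}. (\<exists>m. dm M \<Sigma> z m \<and> dm M \<Sigma> m z') \<or> dm M \<Sigma> z z')"
    by (auto elim!: dm.cases) (metis mem_Collect_eq)+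
qed


lemma ueq_L: "ueq M \<Sigma> x y \<Longrightarrow> Lset M \<Sigma> x = Lset M \<Sigma> y" by (auto elim: ueq.cases)
lemma ueq_up: "ueq M \<Sigma> x y \<Longrightarrow> cov M x z \<Longrightarrow> \<exists>z'. cov M y z' \<and> ueq M \<Sigma> z z'"
  by (auto elim!: ueq.cases)
lemma dm_down: "dm M \<Sigma> x y \<Longrightarrow> cov M p x \<Longrightarrow> \<exists>q. cov M q y \<and> dm M \<Sigma> p q"
  by (auto elim!: dm.cases)

lemma CL: assumes "dm M \<Sigma> a b" "clu M a a'"
  shows "\<exists>b'. clu M b b' \<and> dm M \<Sigma> a' b' \<and> label M \<Sigma> a' = label M \<Sigma> b'"
proof -
  have "label M \<Sigma> a' \<in> Lset M \<Sigma> a" using assms(2) unfolding Lset_def by blast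
  also have "\<dots> = Lset M \<Sigma> b" using ueq_L dm_ueq assms(1) by blast
  finally obtain b' where b': "clu M b b'" "label M \<Sigma> b' = label M \<Sigma> a'"
    by (force simp: Lset_def)
  have "dm M \<Sigma> a' b'" using dm_trans[OF dm_trans[OF dm_clu[OF clu_sym[OF assms(2)]] assms(1)] dm_clu[OF b'(1)]] .
  then show ?thesis using b' by auto
qed

lemma fwd: "dm M \<Sigma> w v \<Longrightarrow> le w w' \<Longrightarrow> \<exists>v'. le v v' \<and> dm M \<Sigma> w' v' \<and> label M \<Sigma> w' = label M \<Sigma> v'"
proof (induction "hgt w" arbitrary: w v rule: less_induct)
  case less
  show ?case
  proof (cases "le w' w")
    case True
    then have "clu M w w'" using less.prems unfolding clu_def by blast
    then show ?thesis using CL less.prems unfolding clu_def by blast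
  next
    case False
    then have "st w w'" using less.prems unfolding strict_def by blast
    then obtain z where z: "cov M w z" "le z w'" using cov_up by blast
    obtain z' where z': "cov M v z'" "ueq M \<Sigma> z z'" using ueq_up dm_ueq less.prems z by blast
    have "dm M \<Sigma> z z'"
    proof (rule dm.intros[OF z'(2)])
      show "\<forall>p\<in>{p. cov M p z}. \<exists>q\<in>{q. cov M q z'}. dm M \<Sigma> p q"
        using z'(1) z(1) cov_unique dm_clu dm_trans less.prems(1) by blast
      show "\<forall>q\<in>{q. cov M q z'}. \<exists>p\<in>{p. cov M p z}. dm M \<Sigma> p q"
        using z'(1) z(1) cov_unique dm_clu dm_trans less.prems(1) by blast
    qed
    moreover have "hgt z < hgt w" using hgt_st cov_st z by blast
    ultimately obtain v' where "le z' v'" "dm M \<Sigma> w' v'" "label M \<Sigma> w' = label M \<Sigma> v'"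
      using less.hyps z(2) by blast
    moreover have "le v z'" using z' cov_st unfolding strict_def by blast
    ultimately show ?thesis using le_trans by blast
  qed
qed

lemma dwn: "dm M \<Sigma> v v' \<Longrightarrow> le w v \<Longrightarrow> \<exists>w'. le w' v' \<and> dm M \<Sigma> w w' \<and> label M \<Sigma> w = label M \<Sigma> w'"
proof (induction "n - hgt v" arbitrary: v v' rule: less_induct)
  case less
  show ?case
  proof (cases "le v w")
    case True
    then have "clu M v w" using less.prems unfolding clu_def by blast
    then show ?thesis using CL less.prems unfolding clu_def by blast
  next
    case False
    then have "st w v" using less.prems unfolding strict_def by blast
    then obtain q where q: "cov M q v" "le w q" using cov_down by blast
    obtain q' where q': "cov M q' v'" "dm M \<Sigma> q q'" using dm_down less.prems q by blast
    have "hgt v < hgt q" "hgt q \<le> n" using hgt_st cov_st q hgt(2) stW by blast+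
    then have "n - hgt q < n - hgt v" by arith
    then obtain w' where "le w' q'" "dm M \<Sigma> w w'" "label M \<Sigma> w = label M \<Sigma> w'"
      using less.hyps q(2) q'(2) by blast
    moreover have "le q' v'" using q' cov_st unfolding strict_def by blast
    ultimately show ?thesis using le_trans by blast
  qed
qed

definition E where "E = {(x,y). dm M \<Sigma> x y \<and> label M \<Sigma> x = label M \<Sigma> y}"

lemma E_strong: "strong_bisimulation M \<Sigma> E"
  unfolding strong_bisimulation_def bisimulation_def forward_confluent_def backward_confluent_def
    downward_confluent_def
proof (intro conjI allI impI)
  show "E \<subseteq> W M \<times> W M" unfolding E_def using dm_ueq ueqW by blast
  show "\<And>w v. (w, v) \<in> E \<Longrightarrow> label M \<Sigma> w = label M \<Sigma> v" unfolding E_def by blast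
  show "\<exists>v'. le v v' \<and> (w', v') \<in> E" if "le w w' \<and> (w, v) \<in> E" for w w' v
    using fwd that unfolding E_def by blast
  show "\<exists>w'. le w w' \<and> (w', v') \<in> E" if "(w, v) \<in> E \<and> le v v'" for w v v'
    using fwd[of v w v'] that dm_sym unfolding E_def by fastforce
  show "\<exists>w'. (w, w') \<in> E \<and> le w' v'" if "le w v \<and> (v, v') \<in> E" for w v v'
    using dwn that unfolding E_def by blast
  show "\<exists>w'. (w, w') \<in> E\<inverse> \<and> le w' v'" if "le w v \<and> (v, v') \<in> E\<inverse>" for w v v'
    using dwn[of v v' w] that dm_sym unfolding E_def by fastforce
qed


definition ucl where "ucl z = {z'. ueq M \<Sigma> z z'}"
definition dcl where "dcl z = {z'. dm M \<Sigma> z z'}"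
definition UC where "UC k = ucl ` {z\<in>W M. hgt z < k}"
definition DC where "DC k = dcl ` {z\<in>W M. dh z < k}"
definition succs where "succs x = ucl ` {z. cov M x z}"
definition pinfo where "pinfo x = dcl ` {p. cov M p x}"
definition PP where "PP = label M \<Sigma> ` W M"
definition g where "g x = ((label M \<Sigma> x, Lset M \<Sigma> x - {label M \<Sigma> x}), succs x, pinfo x)"

lemma ucl_eq: "ueq M \<Sigma> a b \<Longrightarrow> ucl a = ucl b"
  unfolding ucl_def using ueq_sym ueq_trans by blast
lemma ucl_eqD: "b \<in> W M \<Longrightarrow> ucl a = ucl b \<Longrightarrow> ueq M \<Sigma> a b"
  unfolding ucl_def using ueq_clu clu_refl by blast
lemma dcl_eq: "dm M \<Sigma> a b \<Longrightarrow> dcl a = dcl b"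
  unfolding dcl_def using dm_sym dm_trans by blast
lemma dcl_eqD: "b \<in> W M \<Longrightarrow> dcl a = dcl b \<Longrightarrow> dm M \<Sigma> a b"
  unfolding dcl_def using dm_clu clu_refl by blast

lemma covW: "cov M a b \<Longrightarrow> a \<in> W M \<and> b \<in> W M" using cov_st stW by blast

lemma ueq_from_h: assumes "x \<in> W M" "y \<in> W M" "Lset M \<Sigma> x = Lset M \<Sigma> y" "succs x = succs y"
  shows "ueq M \<Sigma> x y"
proof (rule ueq.intros[OF assms(1-3)])
  show "\<forall>z\<in>{z. cov M x z}. \<exists>z'\<in>{z'. cov M y z'}. ueq M \<Sigma> z z'"
  proof
    fix z assume "z \<in> {z. cov M x z}"
    then have "ucl z \<in> succs y" using assms(4) unfolding succs_def by blast
    then obtain z' where "cov M y z'" "ucl z = ucl z'" unfolding succs_def by blast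
    then show "\<exists>z'\<in>{z'. cov M y z'}. ueq M \<Sigma> z z'" using ucl_eqD covW by blast
  qed
  show "\<forall>z'\<in>{z'. cov M y z'}. \<exists>z\<in>{z. cov M x z}. ueq M \<Sigma> z z'"
  proof
    fix z' assume "z' \<in> {z. cov M y z}"
    then have "ucl z' \<in> succs x" using assms(4) unfolding succs_def by blast
    then obtain z where "cov M x z" "ucl z' = ucl z" unfolding succs_def by blast
    then show "\<exists>z\<in>{z. cov M x z}. ueq M \<Sigma> z z'" using ucl_eqD covW ueq_sym by blast
  qed
qed

lemma dm_from_h: assumes "ueq M \<Sigma> x y" "pinfo x = pinfo y"
  shows "dm M \<Sigma> x y"
proof (rule dm.intros[OF assms(1)])
  show "\<forall>z\<in>{z. cov M z x}. \<exists>z'\<in>{z'. cov M z' y}. dm M \<Sigma> z z'"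
  proof
    fix z assume "z \<in> {z. cov M z x}"
    then have "dcl z \<in> pinfo y" using assms(2) unfolding pinfo_def by blast
    then obtain z' where "cov M z' y" "dcl z = dcl z'" unfolding pinfo_def by blast
    then show "\<exists>z'\<in>{z'. cov M z' y}. dm M \<Sigma> z z'" using dcl_eqD covW by blast
  qed
  show "\<forall>z'\<in>{z'. cov M z' y}. \<exists>z\<in>{z. cov M z x}. dm M \<Sigma> z z'"
  proof
    fix z' assume "z' \<in> {z. cov M z y}"
    then have "dcl z' \<in> pinfo x" using assms(2) unfolding pinfo_def by blast
    then obtain z where "cov M z x" "dcl z' = dcl z" unfolding pinfo_def by blast
    then show "\<exists>z\<in>{z. cov M z x}. dm M \<Sigma> z z'" using dcl_eqD covW dm_sym by blast
  qed
qed

lemma lab_in_L: "x \<in> W M \<Longrightarrow> label M \<Sigma> x \<in> Lset M \<Sigma> x"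
  unfolding Lset_def using clu_refl by blast

lemma g_E: assumes "x \<in> W M" "y \<in> W M" "g x = g y" shows "(x,y) \<in> E"
proof -
  have l: "label M \<Sigma> x = label M \<Sigma> y" using assms(3) unfolding g_def by simp
  have "Lset M \<Sigma> x = insert (label M \<Sigma> x) (Lset M \<Sigma> x - {label M \<Sigma> x})"
    using lab_in_L assms(1) by blast
  also have "\<dots> = insert (label M \<Sigma> y) (Lset M \<Sigma> y - {label M \<Sigma> y})"
    using assms(3) unfolding g_def by (metis prod.inject)
  also have "\<dots> = Lset M \<Sigma> y" using lab_in_L assms(2) by blast
  finally have "ueq M \<Sigma> x y" using ueq_from_h assms unfolding g_def by simp
  then have "dm M \<Sigma> x y" using dm_from_h assms unfolding g_def by simp
  then show ?thesis using l unfolding E_def by simp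
qed

lemma pinfo_cases: "pinfo x = {} \<or> (\<exists>p. cov M p x \<and> pinfo x = {dcl p})"
proof (cases "\<exists>p. cov M p x")
  case True
  then obtain p where p: "cov M p x" by blast
  have "pinfo x = {dcl p}" unfolding pinfo_def using p cov_unique dm_clu dcl_eq by blast
  then show ?thesis using p by blast
qed (auto simp: pinfo_def)

lemma Lset_sub: "Lset M \<Sigma> x \<subseteq> PP" unfolding Lset_def PP_def using cluW by blast

lemma PP_sub: "PP \<subseteq> Pow \<Sigma> \<times> Pow \<Sigma>"
  unfolding PP_def label_def label_pos_def label_dia_def by auto


lemma PP_fin: "finite \<Sigma> \<Longrightarrow> finite PP" using PP_sub finite_subset by blast

lemma UC0: "UC 0 = {}" unfolding UC_def by simp
lemma DC0: "DC 0 = {}" unfolding DC_def by simp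

lemma UC_Suc: assumes "finite \<Sigma>" "finite (UC k)"
  shows "finite (UC (Suc k)) \<and> card (UC (Suc k)) \<le> 2 ^ card PP * 2 ^ card (UC k)"
proof -
  define A where "A = {z\<in>W M. hgt z < Suc k}"
  define h where "h z = (Lset M \<Sigma> z, succs z)" for z
  have sub: "h ` A \<subseteq> Pow PP \<times> Pow (UC k)"
  proof
    fix c assume "c \<in> h ` A"
    then obtain z where z: "z \<in> A" "c = h z" by blast
    have "succs z \<subseteq> UC k"
    proof
      fix u assume "u \<in> succs z"
      then obtain z' where "cov M z z'" "u = ucl z'" unfolding succs_def by blast
      moreover then have "hgt z' < hgt z" "z' \<in> W M" using hgt_st cov_st covW by blast+
      ultimately show "u \<in> UC k" using z unfolding UC_def A_def by auto
    qed
    then show "c \<in> Pow PP \<times> Pow (UC k)" using z Lset_sub unfolding h_def by auto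
  qed
  have fin: "finite (Pow PP \<times> Pow (UC k))" using PP_fin assms by simp
  have "finite (ucl ` A) \<and> card (ucl ` A) \<le> card (h ` A)"
  proof (rule card_factor)
    show "finite (h ` A)" using sub fin finite_subset by blast
    show "ucl x = ucl y" if "x \<in> A" "y \<in> A" "h x = h y" for x y
    proof -
      have "x \<in> W M" "y \<in> W M" "Lset M \<Sigma> x = Lset M \<Sigma> y" "succs x = succs y"
        using that unfolding A_def h_def by auto
      then show ?thesis using ueq_from_h ucl_eq by blast
    qed
  qed
  moreover have "card (h ` A) \<le> card (Pow PP \<times> Pow (UC k))" using card_mono sub fin by blast
  moreover have "card (Pow PP \<times> Pow (UC k)) = 2 ^ card PP * 2 ^ card (UC k)"
    using PP_fin assms by (simp add: card_cartesian_product card_Pow)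
  ultimately show ?thesis unfolding UC_def A_def by simp
qed

lemma UC_fin: "finite \<Sigma> \<Longrightarrow> finite (UC k)"
proof (induction k)
  case (Suc k) then show ?case using UC_Suc by blast
qed (simp add: UC0)

lemma DC_Suc: assumes "finite \<Sigma>" "finite (DC k)"
  shows "finite (DC (Suc k)) \<and> card (DC (Suc k)) \<le> card (UC (Suc n)) * (card (DC k) + 1)"
proof -
  define A where "A = {z\<in>W M. dh z < Suc k}"
  define T where "T = {{}} \<union> (\<lambda>c. {c}) ` DC k"
  define h where "h z = (ucl z, pinfo z)" for z
  have sub: "h ` A \<subseteq> UC (Suc n) \<times> T"
  proof
    fix c assume "c \<in> h ` A"
    then obtain z where z: "z \<in> A" "c = h z" by blast
    have zW: "z \<in> W M" using z unfolding A_def by blast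
    then have "hgt z < Suc n" using hgt(2) by (simp add: le_imp_less_Suc)
    then have "ucl z \<in> UC (Suc n)" using zW unfolding UC_def by blast
    moreover have "pinfo z \<in> T"
    proof (cases "pinfo z = {}")
      case True then show ?thesis unfolding T_def by blast
    next
      case False
      then obtain p where p: "cov M p z" "pinfo z = {dcl p}" using pinfo_cases[of z] by blast
      have "dh p < dh z" "p \<in> W M" using dh_st[OF cov_st[OF p(1)]] covW[OF p(1)] by auto
      moreover have "dh z < Suc k" using z unfolding A_def by blast
      ultimately have "p \<in> {z \<in> W M. dh z < k}" by simp
      then have "dcl p \<in> DC k" unfolding DC_def by (rule imageI)
      then have "{dcl p} \<in> (\<lambda>c. {c}) ` DC k" by (rule imageI)
      then show ?thesis unfolding T_def using p(2) by simp
    qed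
    ultimately show "c \<in> UC (Suc n) \<times> T" using z unfolding h_def by simp
  qed
  have fT: "finite T" "card T \<le> card (DC k) + 1" using card_single[OF assms(2)] unfolding T_def by blast+
  have fin: "finite (UC (Suc n) \<times> T)" using UC_fin assms fT by simp
  have "finite (dcl ` A) \<and> card (dcl ` A) \<le> card (h ` A)"
  proof (rule card_factor)
    show "finite (h ` A)" using sub fin finite_subset by blast
    show "dcl x = dcl y" if "x \<in> A" "y \<in> A" "h x = h y" for x y
    proof -
      have "y \<in> W M" "ucl x = ucl y" "pinfo x = pinfo y"
        using that unfolding A_def h_def by auto
      then show ?thesis using ucl_eqD dm_from_h dcl_eq by blast
    qed
  qed
  moreover have "card (h ` A) \<le> card (UC (Suc n) \<times> T)" using card_mono sub fin by blast
  moreover have "card (UC (Suc n) \<times> T) \<le> card (UC (Suc n)) * (card (DC k) + 1)"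
  proof -
    have "card (UC (Suc n) \<times> T) = card (UC (Suc n)) * card T" by (rule card_cartesian_product)
    also have "\<dots> \<le> card (UC (Suc n)) * (card (DC k) + 1)" using fT(2) by (rule mult_le_mono2)
    finally show ?thesis .
  qed
  ultimately show ?thesis unfolding DC_def A_def by simp
qed

lemma DC_fin: "finite \<Sigma> \<Longrightarrow> finite (DC k)"
proof (induction k)
  case (Suc k) then show ?case using DC_Suc by blast
qed (simp add: DC0)


lemma PP_Q: "PP \<subseteq> {(A,B). A \<subseteq> \<Sigma> \<and> B \<subseteq> \<Sigma> \<and> A \<inter> B = {}}"
proof
  fix c assume "c \<in> PP"
  then obtain x where x: "x \<in> W M" "c = label M \<Sigma> x" unfolding PP_def by blast
  have "(x,x) \<in> sq M" using sq_refl x by blast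
  then show "c \<in> {(A,B). A \<subseteq> \<Sigma> \<and> B \<subseteq> \<Sigma> \<and> A \<inter> B = {}}"
    unfolding x label_def label_pos_def label_dia_def by auto
qed

lemma PP_card: "finite \<Sigma> \<Longrightarrow> card PP \<le> 3 ^ card \<Sigma>"
  using card_Q[of \<Sigma>] PP_Q card_mono le_trans by (meson order_trans)

lemma count_main: assumes "finite \<Sigma>"
  shows "finite (g ` W M) \<and> card (g ` W M) \<le> card PP * 2 ^ (card PP - 1) * 2 ^ card (UC n) * (card (DC n) + 1)"
proof -
  define S1 where "S1 = (SIGMA a:PP. Pow (PP - {a}))"
  define T where "T = {{}} \<union> (\<lambda>c. {c}) ` DC n"
  have sub: "g ` W M \<subseteq> S1 \<times> (Pow (UC n) \<times> T)"
  proof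
    fix c assume "c \<in> g ` W M"
    then obtain x where x: "x \<in> W M" "c = g x" by blast
    have "label M \<Sigma> x \<in> PP" using x unfolding PP_def by blast
    moreover have "Lset M \<Sigma> x - {label M \<Sigma> x} \<subseteq> PP - {label M \<Sigma> x}" using Lset_sub by blast
    moreover have "succs x \<subseteq> UC n"
    proof
      fix u assume "u \<in> succs x"
      then obtain z where z: "cov M x z" "u = ucl z" unfolding succs_def by blast
      have "hgt z < hgt x" "z \<in> W M" using hgt_st[OF cov_st[OF z(1)]] covW[OF z(1)] by auto
      then have "z \<in> {z\<in>W M. hgt z < n}" using hgt(2)[OF x(1)] by simp
      then show "u \<in> UC n" unfolding UC_def z(2) by (rule imageI)
    qed
    moreover have "pinfo x \<in> T"
    proof (cases "pinfo x = {}")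
      case True then show ?thesis unfolding T_def by blast
    next
      case False
      then obtain p where p: "cov M p x" "pinfo x = {dcl p}" using pinfo_cases[of x] by blast
      have "dh p < dh x" "p \<in> W M" using dh_st[OF cov_st[OF p(1)]] covW[OF p(1)] by auto
      then have "p \<in> {z \<in> W M. dh z < n}" using dh(2)[OF x(1)] by simp
      then have "dcl p \<in> DC n" unfolding DC_def by (rule imageI)
      then have "{dcl p} \<in> (\<lambda>c. {c}) ` DC n" by (rule imageI)
      then show ?thesis unfolding T_def using p(2) by simp
    qed
    ultimately show "c \<in> S1 \<times> (Pow (UC n) \<times> T)" unfolding x(2) g_def S1_def by simp
  qed
  have fP: "finite PP" using PP_fin assms by blast
  have fT: "finite T" "card T \<le> card (DC n) + 1" using card_single[OF DC_fin[OF assms]] unfolding T_def by blast+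
  have fS1: "finite S1" unfolding S1_def using fP by simp
  have cS1: "card S1 = card PP * 2 ^ (card PP - 1)"
  proof -
    have "card S1 = (\<Sum>a\<in>PP. card (Pow (PP - {a})))" unfolding S1_def using fP by (simp add: card_SigmaI)
    also have "\<dots> = (\<Sum>a\<in>PP. 2 ^ (card PP - 1))"
      using fP by (intro sum.cong) (simp_all add: card_Pow card_Diff_singleton)
    finally show ?thesis by simp
  qed
  have fin: "finite (S1 \<times> (Pow (UC n) \<times> T))" using fS1 fT UC_fin assms by simp
  have "card (g ` W M) \<le> card (S1 \<times> (Pow (UC n) \<times> T))" using card_mono[OF fin sub] .
  also have "\<dots> = card S1 * (2 ^ card (UC n) * card T)"
    using UC_fin[OF assms] by (simp add: card_cartesian_product card_Pow)
  also have "\<dots> \<le> card S1 * (2 ^ card (UC n) * (card (DC n) + 1))"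
    using fT(2) by (intro mult_le_mono2) simp
  also have "\<dots> = card PP * 2 ^ (card PP - 1) * 2 ^ card (UC n) * (card (DC n) + 1)"
    unfolding cS1 by (simp only: mult.assoc)
  finally have c: "card (g ` W M) \<le> card PP * 2 ^ (card PP - 1) * 2 ^ card (UC n) * (card (DC n) + 1)" .
  have "finite (g ` W M)" using fin sub by (rule finite_subset[rotated])
  then show ?thesis using c by blast
qed

end

lemma all_strong: assumes bm: "is_bimodel M" and e: "\<Sigma> = {}"
  shows "strong_bisimulation M \<Sigma> (W M \<times> W M)"
proof -
  have leW: "(x,y) \<in> leq M \<Longrightarrow> x \<in> W M \<and> y \<in> W M" for x y using bm unfolding is_bimodel_def by blast
  have refl: "x \<in> W M \<Longrightarrow> (x,x) \<in> leq M" for x using bm unfolding is_bimodel_def refl_on_def by blast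
  have lab: "label M \<Sigma> w = label M \<Sigma> v" for w v
    unfolding label_def label_pos_def label_dia_def e by simp
  show ?thesis unfolding strong_bisimulation_def bisimulation_def forward_confluent_def
    backward_confluent_def downward_confluent_def
    using leW refl lab by (intro conjI allI impI; blast)
qed

theorem mainTheorem13:
  fixes M :: "'w bimodel" and \<Sigma> :: "fm set" and n s :: nat
  assumes "is_bimodel M"
    and "forest_like M"
    and "model_height M = enat n"
    and "finite \<Sigma>" and "card \<Sigma> = s"
  shows "finite (W M // approx M \<Sigma>) \<and>
         card (W M // approx M \<Sigma>) \<le> superexp (2 * (n + 1) * s) (n + 2)"
proof (cases "s = 0")
  case True
  then have e: "\<Sigma> = {}" using assms(4,5) by simp
  have q: "finite (W M // approx M \<Sigma>) \<and> card (W M // approx M \<Sigma>) \<le> card ((\<lambda>_. ()) ` W M)"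
    by (rule quot_bound[OF all_strong[OF assms(1) e]]) auto
  have "card ((\<lambda>_. ()) ` W M) \<le> 1"
    by (rule order_trans[OF card_mono[of "UNIV :: unit set"]]) auto
  also have "(1::nat) \<le> superexp (2 * (n + 1) * s) (n + 2)" using se_pos[of _ "n+1"] by simp
  finally show ?thesis using q by linarith
next
  case False
  interpret fl M \<Sigma> n using assms(1-3) by unfold_locales
  have cm: "finite (g ` W M)" "card (g ` W M) \<le> card PP * 2 ^ (card PP - 1) * 2 ^ card (UC n) * (card (DC n) + 1)"
    using count_main[OF assms(4)] by blast+
  have q: "finite (W M // approx M \<Sigma>) \<and> card (W M // approx M \<Sigma>) \<le> card (g ` W M)"
    by (rule quot_bound[OF E_strong g_E cm(1)])
  have "card PP * 2 ^ (card PP - 1) * 2 ^ card (UC n) * (card (DC n) + 1) \<le> superexp (2 * (n + 1) * s) (n + 2)"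
  proof (rule arith_main[where u="\<lambda>k. card (UC k)" and d="\<lambda>k. card (DC k)"])
    show "1 \<le> s" using False by simp
    show "card PP \<le> 3 ^ s" using PP_card assms(4,5) by simp
    show "card (UC 0) = 0" by (simp add: UC0)
    show "card (UC (Suc k)) \<le> 2 ^ card PP * 2 ^ card (UC k)" for k using UC_Suc UC_fin assms(4) by blast
    show "card (DC 0) = 0" by (simp add: DC0)
    show "card (DC (Suc k)) \<le> card (UC (Suc n)) * (card (DC k) + 1)" for k using DC_Suc DC_fin assms(4) by blast
  qed
  then show ?thesis using q cm(2) by linarith
qed

end
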